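(* Let $V$ be a smooth field on $\mathbb{R}^2$ with values in symmetric $2\times2$ real matrices such that $I+V$ is positive definite, and let $F=(I+V)R$ with $R$ orthogonal (polar decomposition) satisfy $\det F=1$. Assume moreover that there is a smooth scalar function $\theta$ on $\mathbb{R}^2$ with $\nabla\cdot V = A(I+V)\nabla\theta$. Then \[ \mathrm{tr}\,V = -\det V \] and \[ \nabla\cdot\nabla\cdot V = -\nabla\cdot\big[AV(I+V)^{-1}A\,\nabla\cdot V\big], \] where $A=\begin{pmatrix}0&-1\\1&0\end{pmatrix}$.
   Context: For a matrix field $M$, $(\nabla\cdot M)_i=\sum_j\partial_j M_{ij}$, and $\nabla\cdot\nabla\cdot V=\sum_{i,j}\partial_i\partial_j V_{ij}$; for a vector field $w$, $\nabla\cdot w=\sum_i\partial_i w_i$. In the paper's setting, the relation $\nabla\cdot V=A(I+V)\nabla\theta$ (with $\theta$ the rotation angle of $R$) follows from $\nabla\cdot F^T=0$ and is preserved by the viscoelastic flow. *)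

theory Defs
  imports "HOL-Analysis.Analysis"
begin

definition partial :: "2 \<Rightarrow> (real^2 \<Rightarrow> real) \<Rightarrow> real^2 \<Rightarrow> real" where
  "partial j f x = deriv (\<lambda>t. f (x + t *\<^sub>R axis j 1)) 0"

fun Ck :: "nat \<Rightarrow> (real^2 \<Rightarrow> real) \<Rightarrow> bool" where
  "Ck 0 f = continuous_on UNIV f"
| "Ck (Suc k) f = (f differentiable_on UNIV \<and> (\<forall>j. Ck k (partial j f)))"

definition smooth_fun :: "(real^2 \<Rightarrow> real) \<Rightarrow> bool" where
  "smooth_fun f \<longleftrightarrow> (\<forall>k. Ck k f)"

definition smooth_mat :: "(real^2 \<Rightarrow> real^2^2) \<Rightarrow> bool" where
  "smooth_mat M \<longleftrightarrow> (\<forall>i j. smooth_fun (\<lambda>x. M x $ i $ j))"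

definition symmetric_mat :: "real^2^2 \<Rightarrow> bool" where
  "symmetric_mat M \<longleftrightarrow> transpose M = M"

definition pos_def_mat :: "real^2^2 \<Rightarrow> bool" where
  "pos_def_mat M \<longleftrightarrow> (\<forall>v. v \<noteq> 0 \<longrightarrow> v \<bullet> (M *v v) > 0)"

definition grad :: "(real^2 \<Rightarrow> real) \<Rightarrow> real^2 \<Rightarrow> real^2" where
  "grad f x = (\<chi> i. partial i f x)"

definition div_vec :: "(real^2 \<Rightarrow> real^2) \<Rightarrow> real^2 \<Rightarrow> real" where
  "div_vec w x = (\<Sum>i\<in>UNIV. partial i (\<lambda>y. w y $ i) x)"

definition div_mat :: "(real^2 \<Rightarrow> real^2^2) \<Rightarrow> real^2 \<Rightarrow> real^2" where
  "div_mat M x = (\<chi> i. \<Sum>j\<in>UNIV. partial j (\<lambda>y. M y $ i $ j) x)"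

definition rotA :: "real^2^2" where
  "rotA = vector [vector [0, -1], vector [1, 0]]"

end

theory Submission
  imports Defs
begin

lemma line_deriv:
  fixes f :: "real^2 \<Rightarrow> real"
  assumes "f differentiable (at (x + t *\<^sub>R u))"
  shows "((\<lambda>s. f (x + s *\<^sub>R u)) has_real_derivative
           frechet_derivative f (at (x + t *\<^sub>R u)) u) (at t)"
proof -
  let ?p = "x + t *\<^sub>R u"
  let ?F = "frechet_derivative f (at ?p)"
  have F: "(f has_derivative ?F) (at ?p)" using assms frechet_derivative_works by blast
  have L: "((\<lambda>s. x + s *\<^sub>R u) has_derivative (\<lambda>d. d *\<^sub>R u)) (at t)"
    by (auto intro!: derivative_eq_intros)
  have "((\<lambda>s. f (x + s *\<^sub>R u)) has_derivative (\<lambda>d. ?F (d *\<^sub>R u))) (at t)"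
    using has_derivative_compose[OF L F] by simp
  moreover have "linear ?F" using F has_derivative_linear by blast
  hence "(\<lambda>d. ?F (d *\<^sub>R u)) = (*) (?F u)"
    by (auto simp: linear_cmul mult.commute)
  ultimately show ?thesis by (simp add: has_field_derivative_def)
qed

lemma partial_frechet:
  fixes f :: "real^2 \<Rightarrow> real"
  assumes "f differentiable (at x)"
  shows "partial j f x = frechet_derivative f (at x) (axis j 1)"
proof -
  have "((\<lambda>s. f (x + s *\<^sub>R axis j 1)) has_real_derivative
           frechet_derivative f (at x) (axis j 1)) (at 0)"
    using line_deriv[of f x 0 "axis j 1"] assms by simp
  thus ?thesis unfolding partial_def by (rule DERIV_imp_deriv)
qed

lemma line_partial:
  fixes f :: "real^2 \<Rightarrow> real"
  assumes "\<And>y. f differentiable (at y)"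
  shows "((\<lambda>s. f (x + s *\<^sub>R axis j 1)) has_real_derivative
           partial j f (x + t *\<^sub>R axis j 1)) (at t)"
  using line_deriv[of f x t "axis j 1"] assms partial_frechet by metis

lemma partial_has:
  fixes f :: "real^2 \<Rightarrow> real"
  assumes "f differentiable (at x)"
  shows "((\<lambda>s. f (x + s *\<^sub>R axis j 1)) has_real_derivative partial j f x) (at 0)"
  using line_deriv[of f x 0 "axis j 1"] assms partial_frechet[OF assms] by simp

lemma partial_add:
  fixes f g :: "real^2 \<Rightarrow> real"
  assumes "f differentiable (at x)" "g differentiable (at x)"
  shows "partial j (\<lambda>y. f y + g y) x = partial j f x + partial j g x"
  unfolding partial_def[of j "\<lambda>y. f y + g y"]
  by (rule DERIV_imp_deriv, rule DERIV_add[OF partial_has[OF assms(1)] partial_has[OF assms(2)]])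

lemma partial_minus:
  fixes f :: "real^2 \<Rightarrow> real"
  assumes "f differentiable (at x)"
  shows "partial j (\<lambda>y. - f y) x = - partial j f x"
  unfolding partial_def[of j "\<lambda>y. - f y"]
  by (rule DERIV_imp_deriv, rule DERIV_minus[OF partial_has[OF assms(1)]])

lemma smooth_diff: "smooth_fun f \<Longrightarrow> f differentiable (at y)"
  unfolding smooth_fun_def
  by (metis Ck.simps(2) UNIV_I differentiable_on_def)

lemma smooth_partial: "smooth_fun f \<Longrightarrow> smooth_fun (partial j f)"
  unfolding smooth_fun_def by (metis Ck.simps(2))

lemma smooth_cont: "smooth_fun f \<Longrightarrow> continuous_on UNIV f"
  unfolding smooth_fun_def by (metis Ck.simps(1))

lemma mvt_step:
  fixes f :: "real^2 \<Rightarrow> real"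
  assumes df: "\<And>y. f differentiable (at y)"
    and dpf: "\<And>y. partial j f differentiable (at y)"
    and h: "h > 0"
  shows "\<exists>\<sigma> \<tau>. 0 < \<sigma> \<and> \<sigma> < h \<and> 0 < \<tau> \<and> \<tau> < h \<and>
    f (x + h *\<^sub>R axis i 1 + h *\<^sub>R axis j 1) - f (x + h *\<^sub>R axis i 1)
      - f (x + h *\<^sub>R axis j 1) + f x
    = h * h * partial i (partial j f) (x + \<sigma> *\<^sub>R axis i 1 + \<tau> *\<^sub>R axis j 1)"
proof -
  let ?ei = "axis i 1 :: real^2" and ?ej = "axis j 1 :: real^2"
  let ?phi = "\<lambda>t. f ((x + h *\<^sub>R ?ei) + t *\<^sub>R ?ej) - f (x + t *\<^sub>R ?ej)"
  have "\<And>t. (?phi has_real_derivative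
      (partial j f ((x + h *\<^sub>R ?ei) + t *\<^sub>R ?ej) - partial j f (x + t *\<^sub>R ?ej))) (at t)"
    by (intro DERIV_diff line_partial df)
  then obtain \<tau> where tau: "0 < \<tau>" "\<tau> < h"
    "?phi h - ?phi 0 = (h - 0) * (partial j f ((x + h *\<^sub>R ?ei) + \<tau> *\<^sub>R ?ej) - partial j f (x + \<tau> *\<^sub>R ?ej))"
    using MVT2[OF h, where f="?phi" and f'="\<lambda>t. partial j f ((x + h *\<^sub>R ?ei) + t *\<^sub>R ?ej) - partial j f (x + t *\<^sub>R ?ej)"] by blast
  let ?psi = "\<lambda>s. partial j f ((x + \<tau> *\<^sub>R ?ej) + s *\<^sub>R ?ei)"
  have "\<And>s. (?psi has_real_derivative partial i (partial j f) ((x + \<tau> *\<^sub>R ?ej) + s *\<^sub>R ?ei)) (at s)"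
    by (intro line_partial dpf)
  then obtain \<sigma> where sig: "0 < \<sigma>" "\<sigma> < h"
    "?psi h - ?psi 0 = (h - 0) * partial i (partial j f) ((x + \<tau> *\<^sub>R ?ej) + \<sigma> *\<^sub>R ?ei)"
    using MVT2[OF h, where f="?psi" and f'="\<lambda>s. partial i (partial j f) ((x + \<tau> *\<^sub>R ?ej) + s *\<^sub>R ?ei)"] by blast
  have e1: "(x + h *\<^sub>R ?ei) + \<tau> *\<^sub>R ?ej = (x + \<tau> *\<^sub>R ?ej) + h *\<^sub>R ?ei"
    by (simp add: algebra_simps)
  have e2: "(x + \<tau> *\<^sub>R ?ej) + \<sigma> *\<^sub>R ?ei = x + \<sigma> *\<^sub>R ?ei + \<tau> *\<^sub>R ?ej"
    by (simp add: algebra_simps)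
  have A: "?phi h - ?phi 0 = h * (?psi h - ?psi 0)"
    using tau(3) unfolding e1 by simp
  also have "\<dots> = h * (h * partial i (partial j f) (x + \<sigma> *\<^sub>R ?ei + \<tau> *\<^sub>R ?ej))"
    using sig(3) unfolding e2 by simp
  finally have B: "?phi h - ?phi 0 = h * h * partial i (partial j f) (x + \<sigma> *\<^sub>R ?ei + \<tau> *\<^sub>R ?ej)"
    by simp
  show ?thesis
    apply (rule exI[of _ \<sigma>], rule exI[of _ \<tau>])
    using tau(1,2) sig(1,2) B by simp
qed

lemma clairaut:
  fixes f :: "real^2 \<Rightarrow> real"
  assumes df: "\<And>y. f differentiable (at y)"
    and d1: "\<And>y. partial 1 f differentiable (at y)"
    and d2: "\<And>y. partial 2 f differentiable (at y)"
    and c12: "continuous_on UNIV (partial 1 (partial 2 f))"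
    and c21: "continuous_on UNIV (partial 2 (partial 1 f))"
  shows "partial 1 (partial 2 f) x = partial 2 (partial 1 f) x"
proof (rule ccontr)
  let ?g1 = "partial 1 (partial 2 f)" and ?g2 = "partial 2 (partial 1 f)"
  assume ne: "?g1 x \<noteq> ?g2 x"
  define e where "e = \<bar>?g1 x - ?g2 x\<bar> / 2"
  have e: "e > 0" using ne by (simp add: e_def)
  obtain r1 where r1: "r1 > 0" "\<And>y. dist y x < r1 \<Longrightarrow> dist (?g1 y) (?g1 x) < e"
    using c12 e unfolding continuous_on_iff by blast
  obtain r2 where r2: "r2 > 0" "\<And>y. dist y x < r2 \<Longrightarrow> dist (?g2 y) (?g2 x) < e"
    using c21 e unfolding continuous_on_iff by blast
  define h where "h = min r1 r2 / 4"
  have h: "h > 0" using r1 r2 by (simp add: h_def)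
  have near: "dist (x + s *\<^sub>R axis i 1 + t *\<^sub>R axis j 1) x < min r1 r2"
    if "0 < s" "s < h" "0 < t" "t < h" for s t and i j :: 2
  proof -
    have "dist (x + s *\<^sub>R axis i 1 + t *\<^sub>R axis j 1) x = norm (s *\<^sub>R axis i 1 + t *\<^sub>R (axis j 1 :: real^2))"
      by (simp add: dist_norm)
    also have "\<dots> \<le> norm (s *\<^sub>R (axis i 1 :: real^2)) + norm (t *\<^sub>R (axis j 1 :: real^2))"
      by (rule norm_triangle_ineq)
    also have "\<dots> = s + t" using that by (simp add: norm_axis_1)
    also have "\<dots> < min r1 r2" using that h_def r1 r2 by simp
    finally show ?thesis .
  qed
  obtain s1 t1 where st1: "0 < s1" "s1 < h" "0 < t1" "t1 < h"
    "f (x + h *\<^sub>R axis 1 1 + h *\<^sub>R axis 2 1) - f (x + h *\<^sub>R axis 1 1) - f (x + h *\<^sub>R axis 2 1) + f x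
     = h * h * ?g1 (x + s1 *\<^sub>R axis 1 1 + t1 *\<^sub>R axis 2 1)"
    using mvt_step[OF df d2 h, of x 1] by blast
  obtain s2 t2 where st2: "0 < s2" "s2 < h" "0 < t2" "t2 < h"
    "f (x + h *\<^sub>R axis 2 1 + h *\<^sub>R axis 1 1) - f (x + h *\<^sub>R axis 2 1) - f (x + h *\<^sub>R axis 1 1) + f x
     = h * h * ?g2 (x + s2 *\<^sub>R axis 2 1 + t2 *\<^sub>R axis 1 1)"
    using mvt_step[OF df d1 h, of x 2] by blast
  have ee: "x + h *\<^sub>R axis 2 1 + h *\<^sub>R axis 1 1 = x + h *\<^sub>R axis 1 1 + h *\<^sub>R (axis 2 1 :: real^2)"
    by (simp add: algebra_simps)
  have "h * h * ?g1 (x + s1 *\<^sub>R axis 1 1 + t1 *\<^sub>R axis 2 1) = h * h * ?g2 (x + s2 *\<^sub>R axis 2 1 + t2 *\<^sub>R axis 1 1)"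
    using st1(5) st2(5)[unfolded ee] by linarith
  hence eq: "?g1 (x + s1 *\<^sub>R axis 1 1 + t1 *\<^sub>R axis 2 1) = ?g2 (x + s2 *\<^sub>R axis 2 1 + t2 *\<^sub>R axis 1 1)"
    using h by simp
  have a: "dist (?g1 (x + s1 *\<^sub>R axis 1 1 + t1 *\<^sub>R axis 2 1)) (?g1 x) < e"
    using r1(2) near[OF st1(1-4)] by (meson min_less_iff_conj)
  have b: "dist (?g2 (x + s2 *\<^sub>R axis 2 1 + t2 *\<^sub>R axis 1 1)) (?g2 x) < e"
    using r2(2) near[OF st2(1-4)] by (meson min_less_iff_conj)
  have "\<bar>?g1 x - ?g2 x\<bar> < 2 * e" using a b eq by (simp add: dist_real_def)
  thus False by (simp add: e_def)
qed

lemma pd2_det: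
  fixes M :: "real^2^2"
  assumes pd: "pos_def_mat M" and sym: "M$1$2 = M$2$1"
  shows "det M > 0"
proof -
  have "(axis 1 1 :: real^2) \<noteq> 0" by (simp add: axis_eq_0_iff)
  hence "axis 1 1 \<bullet> (M *v axis 1 1) > 0" using pd unfolding pos_def_mat_def by blast
  hence m11: "M$1$1 > 0"
    by (simp add: inner_vec_def matrix_vector_mult_def sum_2 axis_def)
  let ?v = "vector [M$1$2, - M$1$1] :: real^2"
  have "?v $ 2 \<noteq> 0" using m11 by simp
  hence "?v \<noteq> 0" by (metis zero_index)
  hence "?v \<bullet> (M *v ?v) > 0" using pd unfolding pos_def_mat_def by blast
  hence "M$1$1 * det M > 0"
    using sym by (simp add: inner_vec_def matrix_vector_mult_def sum_2 det_2 algebra_simps power2_eq_square)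
  thus ?thesis using m11 by (simp add: zero_less_mult_iff)
qed

lemma rotA_rotA: "rotA *v (rotA *v u) = - (u :: real^2)"
  by (simp add: vec_eq_iff forall_2 rotA_def matrix_vector_mult_def sum_2)

lemma matrix_inv_left':
  fixes M :: "real^2^2"
  assumes "invertible M"
  shows "matrix_inv M ** M = mat 1"
proof -
  have "\<exists>A'. M ** A' = mat 1 \<and> A' ** M = mat 1" using assms unfolding invertible_def by blast
  from someI_ex[OF this] show ?thesis unfolding matrix_inv_def by blast
qed


theorem lemma2p1:
  fixes V R :: "real^2 \<Rightarrow> real^2^2" and \<theta> :: "real^2 \<Rightarrow> real"
  assumes V_smooth: "smooth_mat V"
    and R_smooth: "smooth_mat R"
    and V_sym: "\<And>x. symmetric_mat (V x)"
    and V_pos: "\<And>x. pos_def_mat (mat 1 + V x)"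
    and R_orth: "\<And>x. orthogonal_matrix (R x)"
    and detF: "\<And>x. det ((mat 1 + V x) ** R x) = 1"
    and theta_smooth: "smooth_fun \<theta>"
    and divV: "\<And>x. div_mat V x = (rotA ** (mat 1 + V x)) *v grad \<theta> x"
  shows "(\<forall>x. trace (V x) = - det (V x)) \<and>
         (\<forall>x. div_vec (div_mat V) x =
           - div_vec (\<lambda>y. (rotA ** V y ** matrix_inv (mat 1 + V y) ** rotA) *v div_mat V y) x)"
proof -
  have symV: "V x $ 1 $ 2 = V x $ 2 $ 1" for x
  proof -
    have "transpose (V x) $ 1 $ 2 = V x $ 1 $ 2" using V_sym[of x] unfolding symmetric_mat_def by simp
    thus ?thesis by (simp add: transpose_def)
  qed
  have det1: "det (mat 1 + V x) = 1" for x
  proof -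
    have pos: "det (mat 1 + V x) > 0"
      by (rule pd2_det[OF V_pos]) (simp add: symV mat_def)
    have "det (mat 1 + V x) * det (R x) = 1" using detF[of x] by (simp add: det_mul)
    moreover have "det (R x) = 1 \<or> det (R x) = -1" using det_orthogonal_matrix[OF R_orth] .
    ultimately show ?thesis using pos by auto
  qed
  have part1: "trace (V x) = - det (V x)" for x
    using det1[of x] by (simp add: det_2 trace_def sum_2 mat_def algebra_simps)
  have inv: "invertible (mat 1 + V x)" for x using det1[of x] by (simp add: invertible_det_nz)
  define p where "p = partial 1 \<theta>"
  define q where "q = partial 2 \<theta>"
  have sp: "smooth_fun p" and sq: "smooth_fun q"
    unfolding p_def q_def by (simp_all add: smooth_partial theta_smooth)
  have dp: "\<And>y. p differentiable (at y)" using smooth_diff[OF sp] .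
  have dq: "\<And>y. q differentiable (at y)" using smooth_diff[OF sq] .
  have dV: "\<And>i j y. (\<lambda>y. V y $ i $ j) differentiable (at y)"
    using V_smooth unfolding smooth_mat_def by (simp add: smooth_diff)
  have clair: "partial 1 q x = partial 2 p x" for x
    unfolding p_def q_def
  proof (rule clairaut)
    show "\<And>y. \<theta> differentiable (at y)" by (rule smooth_diff[OF theta_smooth])
    show "\<And>y. partial 1 \<theta> differentiable (at y)" using dp unfolding p_def .
    show "\<And>y. partial 2 \<theta> differentiable (at y)" using dq unfolding q_def .
    show "continuous_on UNIV (partial 1 (partial 2 \<theta>))"
      using smooth_cont[OF smooth_partial[OF sq]] unfolding q_def .
    show "continuous_on UNIV (partial 2 (partial 1 \<theta>))"
      using smooth_cont[OF smooth_partial[OF sp]] unfolding p_def .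
  qed
  define a where "a = (\<lambda>y. V y $ 2 $ 1 * p y + V y $ 2 $ 2 * q y)"
  define b where "b = (\<lambda>y. V y $ 1 $ 1 * p y + V y $ 1 $ 2 * q y)"
  have da: "\<And>y. a differentiable (at y)" unfolding a_def
    using dV dp dq by (intro derivative_intros) auto
  have db: "\<And>y. b differentiable (at y)" unfolding b_def
    using dV dp dq by (intro derivative_intros) auto
  have g: "grad \<theta> y = vector [p y, q y]" for y
    by (simp add: vec_eq_iff forall_2 grad_def p_def q_def)
  have c1: "(\<lambda>y. div_mat V y $ 1) = (\<lambda>y. - (q y + a y))"
    by (rule ext, simp add: divV g a_def rotA_def matrix_vector_mult_def matrix_matrix_mult_def sum_2 mat_def algebra_simps)
  have c2: "(\<lambda>y. div_mat V y $ 2) = (\<lambda>y. p y + b y)"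
    by (rule ext, simp add: divV g b_def rotA_def matrix_vector_mult_def matrix_matrix_mult_def sum_2 mat_def algebra_simps)
  have w: "(rotA ** V y ** matrix_inv (mat 1 + V y) ** rotA) *v div_mat V y = - ((rotA ** V y) *v grad \<theta> y)" for y
  proof -
    let ?M = "mat 1 + V y" and ?g = "grad \<theta> y"
    have "(rotA ** V y ** matrix_inv ?M ** rotA) *v div_mat V y
        = (rotA ** V y ** matrix_inv ?M) *v (rotA *v (rotA *v (?M *v ?g)))"
      by (simp add: divV matrix_vector_mul_assoc matrix_mul_assoc)
    also have "\<dots> = - ((rotA ** V y ** matrix_inv ?M) *v (?M *v ?g))"
      by (simp add: rotA_rotA vec.neg)
    also have "\<dots> = - ((rotA ** V y) *v ((matrix_inv ?M ** ?M) *v ?g))"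
      by (simp add: matrix_vector_mul_assoc matrix_mul_assoc)
    also have "\<dots> = - ((rotA ** V y) *v ?g)"
      by (simp add: matrix_inv_left'[OF inv])
    finally show ?thesis .
  qed
  have w1: "(\<lambda>y. ((rotA ** V y ** matrix_inv (mat 1 + V y) ** rotA) *v div_mat V y) $ 1) = a"
    by (rule ext, simp only: w, simp add: g a_def rotA_def matrix_vector_mult_def matrix_matrix_mult_def sum_2)
  have w2: "(\<lambda>y. ((rotA ** V y ** matrix_inv (mat 1 + V y) ** rotA) *v div_mat V y) $ 2) = (\<lambda>y. - b y)"
    by (rule ext, simp only: w, simp add: g b_def rotA_def matrix_vector_mult_def matrix_matrix_mult_def sum_2)
  have part2: "div_vec (div_mat V) x =
           - div_vec (\<lambda>y. (rotA ** V y ** matrix_inv (mat 1 + V y) ** rotA) *v div_mat V y) x" for x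
  proof -
    have L: "div_vec (div_mat V) x = - (partial 1 q x + partial 1 a x) + (partial 2 p x + partial 2 b x)"
      unfolding div_vec_def sum_2 c1 c2
      using partial_minus[of "\<lambda>y. q y + a y" x 1] partial_add[OF dq[of x] da[of x], of 1]
        partial_add[OF dp[of x] db[of x], of 2] dq da
      by (simp add: derivative_intros)
    have R: "div_vec (\<lambda>y. (rotA ** V y ** matrix_inv (mat 1 + V y) ** rotA) *v div_mat V y) x
        = partial 1 a x - partial 2 b x"
      unfolding div_vec_def sum_2 w1 w2 using partial_minus[OF db[of x], of 2] by simp
    show ?thesis using L R clair[of x] by simp
  qed
  show ?thesis using part1 part2 by blast
qed

end
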